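(* For $|q|<1$ and nonzero $z$ with $zq^n\neq1\neq z^{-1}q^n$ for $n\ge1$, \[ \frac{1}{(q;q)_\infty}\left(1+\sum_{n=1}^\infty\frac{(1-z)(1-z^{-1})(-1)^nq^{n(3n-1)/2}(1+q^{3n})}{(1-zq^n)(1-z^{-1}q^n)}\right)=(z+z^{-1}-1)R(z,q)+(1-z)(1-z^{-1}), \] where \[ R(z,q)=\frac{1}{(q;q)_\infty}\left(1+\sum_{n=1}^\infty\frac{(1-z)(1-z^{-1})(-1)^nq^{n(3n+1)/2}(1+q^n)}{(1-zq^n)(1-z^{-1}q^n)}\right). \]
   Context: Notation: $(q;q)_\infty=\prod_{j\ge1}(1-q^j)$. *)

theory Defs
  imports "HOL-Analysis.Analysis"
begin

definition qpoch_inf :: "complex \<Rightarrow> complex" where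
  "qpoch_inf q = (\<Prod>j. 1 - q ^ (j + 1))"

text \<open>R(z,q) as in the paper; the exponent n(3n+1)/2 is a natural number.\<close>
definition R :: "complex \<Rightarrow> complex \<Rightarrow> complex" where
  "R z q = (1 + (\<Sum>n. (\<lambda>m. (1 - z) * (1 - inverse z) * (-1) ^ m
        * q ^ ((m * (3 * m + 1)) div 2) * (1 + q ^ m)
        / ((1 - z * q ^ m) * (1 - inverse z * q ^ m))) (n + 1))) / qpoch_inf q"

end

theory Submission imports Defs begin


definition pch :: "complex \<Rightarrow> nat \<Rightarrow> nat \<Rightarrow> complex" where
  "pch q j n = (\<Prod>i\<in>{j<..n}. 1 - q ^ i)"
definition tri :: "nat \<Rightarrow> nat" where "tri j = j * (j + 1) div 2"
definition tt :: "complex \<Rightarrow> nat \<Rightarrow> nat \<Rightarrow> complex" where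
  "tt q N j = (-1) ^ j * pch q j N * q ^ (N * j + tri j)"
definition SS :: "complex \<Rightarrow> nat \<Rightarrow> complex" where
  "SS q N = (\<Sum>j\<le>N. tt q N j)"
definition pent :: "complex \<Rightarrow> nat \<Rightarrow> complex" where
  "pent q m = (-1) ^ m * q ^ ((m * (3 * m - 1)) div 2) * (1 + q ^ m)"

lemma pch_Suc_right: "j \<le> n \<Longrightarrow> pch q j (Suc n) = pch q j n * (1 - q ^ Suc n)"
proof -
  assume "j \<le> n"
  hence "{j<..Suc n} = insert (Suc n) {j<..n}" by auto
  thus ?thesis unfolding pch_def by (simp add: mult.commute)
qed

lemma pch_Suc_left: "j < n \<Longrightarrow> pch q j n = (1 - q ^ Suc j) * pch q (Suc j) n"
proof -
  assume "j < n"
  hence "{j<..n} = insert (Suc j) {Suc j<..n}" by auto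
  thus ?thesis unfolding pch_def by simp
qed

lemma pch_same [simp]: "pch q n n = 1" unfolding pch_def by simp

lemma tri_Suc: "tri (Suc j) = tri j + Suc j"
proof -
  have "Suc j * (Suc j + 1) = j * (j + 1) + 2 * Suc j" by (simp add: algebra_simps)
  thus ?thesis unfolding tri_def by simp
qed

lemma pe_Suc: "(Suc n * (3 * Suc n - 1)) div 2 = n * Suc n + tri (Suc n)"
proof -
  have "Suc n * (3 * Suc n - 1) = Suc n * (Suc n + 1) + 2 * (n * Suc n)" by (simp add: algebra_simps)
  thus ?thesis unfolding tri_def by simp
qed

definition BB :: "complex \<Rightarrow> nat \<Rightarrow> nat \<Rightarrow> complex" where
  "BB q n j = (if j = 0 then 0 else (-1) ^ j * pch q (j - 1) n * q ^ (n * j + tri j))"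

lemma key_step:
  assumes "j \<le> n"
  shows "tt q (Suc n) j - tt q n j = BB q n (Suc j) - BB q n j"
proof -
  define A where "A = (-1) ^ j * pch q j n * q ^ (n * j + tri j)"
  have e1: "q ^ (Suc n * j + tri j) = q ^ (n * j + tri j) * q ^ j"
    by (simp add: power_add[symmetric] algebra_simps)
  have e2: "q ^ (n * Suc j + tri (Suc j)) = q ^ (n * j + tri j) * q ^ (n + j + 1)"
    by (simp add: power_add[symmetric] algebra_simps tri_Suc)
  have t1: "tt q (Suc n) j = A * (1 - q ^ Suc n) * q ^ j"
  proof -
    have "tt q (Suc n) j = (-1)^j * (pch q j n * (1 - q^Suc n)) * (q^(n*j+tri j) * q^j)"
      unfolding tt_def using assms by (simp only: pch_Suc_right e1)
    thus ?thesis by (simp add: A_def algebra_simps)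
  qed
  have t0: "tt q n j = A" unfolding tt_def A_def by simp
  have b1: "BB q n (Suc j) = - A * q ^ (n + j + 1)"
  proof -
    have "BB q n (Suc j) = (-1)^(Suc j) * pch q j n * q^(n*Suc j+tri(Suc j))" by (simp add: BB_def)
    also have "\<dots> = (-1)^(Suc j) * pch q j n * (q ^ (n * j + tri j) * q ^ (n + j + 1))" unfolding e2 ..
    finally show ?thesis by (simp add: A_def algebra_simps power_add)
  qed
  have b0: "BB q n j = A * (1 - q ^ j)"
  proof (cases j)
    case 0 thus ?thesis by (simp add: BB_def)
  next
    case (Suc k)
    with assms have "k < n" by simp
    thus ?thesis unfolding BB_def A_def using Suc by (simp add: pch_Suc_left algebra_simps)
  qed
  show ?thesis unfolding t1 t0 b1 b0 by (simp add: algebra_simps power_add)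
qed

lemma shanks: "SS q N = 1 + (\<Sum>n<N. pent q (Suc n))"
proof (induction N)
  case 0 show ?case by (simp add: SS_def tt_def tri_def)
next
  case (Suc n)
  have h1: "SS q (Suc n) = (\<Sum>j<Suc n. tt q (Suc n) j) + tt q (Suc n) (Suc n)"
    unfolding SS_def by (simp add: lessThan_Suc_atMost[symmetric])
  have h2: "SS q n = (\<Sum>j<Suc n. tt q n j)"
    unfolding SS_def by (simp add: lessThan_Suc_atMost)
  have h3: "(\<Sum>j<Suc n. tt q (Suc n) j) - (\<Sum>j<Suc n. tt q n j) = BB q n (Suc n)"
  proof -
    have "(\<Sum>j<Suc n. tt q (Suc n) j) - (\<Sum>j<Suc n. tt q n j)
        = (\<Sum>j<Suc n. BB q n (Suc j) - BB q n j)"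
      by (subst sum_subtractf[symmetric], rule sum.cong, auto simp: key_step)
    also have "\<dots> = BB q n (Suc n) - BB q n 0" by (rule sum_lessThan_telescope)
    finally show ?thesis by (simp add: BB_def)
  qed
  have h4: "BB q n (Suc n) + tt q (Suc n) (Suc n) = pent q (Suc n)"
  proof -
    have p: "q ^ (Suc n * Suc n + tri (Suc n)) = q ^ (n * Suc n + tri (Suc n)) * q ^ Suc n"
      by (simp add: power_add[symmetric] algebra_simps)
    have "tt q (Suc n) (Suc n) = (-1)^Suc n * q ^ (Suc n * Suc n + tri (Suc n))" by (simp add: tt_def)
    also have "\<dots> = (-1)^Suc n * (q ^ (n * Suc n + tri (Suc n)) * q ^ Suc n)" unfolding p ..
    finally have a: "tt q (Suc n) (Suc n) = \<dots>" .
    have b: "BB q n (Suc n) = (-1)^Suc n * q ^ (n * Suc n + tri (Suc n))" by (simp add: BB_def)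
    have c: "pent q (Suc n) = (-1)^Suc n * q ^ (n * Suc n + tri (Suc n)) * (1 + q ^ Suc n)"
      unfolding pent_def pe_Suc ..
    show ?thesis unfolding a b c by (simp add: algebra_simps)
  qed
  have "SS q (Suc n) = SS q n + pent q (Suc n)"
    unfolding h1 h2 h4[symmetric] h3[symmetric] by simp
  thus ?case using Suc.IH by simp
qed


lemma pch_0: "pch q 0 N = (\<Prod>i<N. 1 - q ^ (i + 1))"
  by (induction N) (simp_all add: pch_Suc_right)

lemma pch_bound:
  assumes "norm q < 1"
  shows "norm (pch q j N) \<le> exp (1 / (1 - norm q))"
proof -
  let ?r = "norm q"
  have "norm (pch q j N) \<le> (\<Prod>i\<in>{j<..N}. norm (1 - q ^ i))"
    unfolding pch_def by (rule norm_prod_le)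
  also have "\<dots> \<le> (\<Prod>i\<in>{j<..N}. exp (?r ^ i))"
  proof (rule prod_mono)
    fix i
    have "norm (1 - q ^ i) \<le> 1 + ?r ^ i"
      by (metis norm_one norm_power norm_triangle_ineq4)
    also have "\<dots> \<le> exp (?r ^ i)" by (rule exp_ge_add_one_self)
    finally show "0 \<le> norm (1 - q ^ i) \<and> norm (1 - q ^ i) \<le> exp (?r ^ i)" by simp
  qed
  also have "\<dots> = exp (\<Sum>i\<in>{j<..N}. ?r ^ i)" by (simp add: exp_sum)
  also have "\<dots> \<le> exp (1 / (1 - ?r))"
  proof -
    have "(\<Sum>i\<in>{j<..N}. ?r ^ i) \<le> (\<Sum>i. ?r ^ i)"
      by (rule sum_le_suminf) (use assms in auto)
    also have "\<dots> = 1 / (1 - ?r)" using assms by (simp add: suminf_geometric)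
    finally show ?thesis by simp
  qed
  finally show ?thesis .
qed

lemma rem_bound:
  assumes "norm q < 1"
  shows "norm (\<Sum>j<N. tt q N (Suc j)) \<le> exp (1 / (1 - norm q)) / (1 - norm q) * norm q ^ N"
proof -
  let ?r = "norm q" and ?M = "exp (1 / (1 - norm q))"
  have r0: "0 \<le> ?r" and r1: "?r \<le> 1" using assms by auto
  have "norm (\<Sum>j<N. tt q N (Suc j)) \<le> (\<Sum>j<N. norm (tt q N (Suc j)))"
    by (rule norm_sum)
  also have "\<dots> \<le> (\<Sum>j<N. ?M * ?r ^ (N + j))"
  proof (rule sum_mono)
    fix j assume "j \<in> {..<N}"
    hence jN: "j < N" by simp
    have "N + j \<le> N * Suc j + tri (Suc j)"
    proof -
      have h: "j \<le> N * j" using mult_le_mono1[of 1 N j] jN by simp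
      show ?thesis using h mult_Suc_right[of N j] by linarith
    qed
    hence "?r ^ (N * Suc j + tri (Suc j)) \<le> ?r ^ (N + j)"
      by (rule power_decreasing[OF _ r0 r1])
    moreover have "norm (tt q N (Suc j)) = norm (pch q (Suc j) N) * ?r ^ (N * Suc j + tri (Suc j))"
      by (simp add: tt_def norm_mult norm_power)
    moreover have "norm (pch q (Suc j) N) * ?r ^ (N * Suc j + tri (Suc j)) \<le> ?M * ?r ^ (N + j)"
      by (rule mult_mono[OF pch_bound[OF assms, of "Suc j" N] calculation(1)]) (simp_all add: r0)
    ultimately show "norm (tt q N (Suc j)) \<le> ?M * ?r ^ (N + j)" by simp
  qed
  also have "\<dots> = ?M * ?r ^ N * (\<Sum>j<N. ?r ^ j)"
    by (simp add: sum_distrib_left power_add mult.assoc)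
  also have "\<dots> \<le> ?M * ?r ^ N * (1 / (1 - ?r))"
  proof (rule mult_left_mono)
    have "(\<Sum>j<N. ?r ^ j) \<le> (\<Sum>j. ?r ^ j)"
      by (rule sum_le_suminf) (use assms in auto)
    also have "\<dots> = 1 / (1 - ?r)" using assms by (simp add: suminf_geometric)
    finally show "(\<Sum>j<N. ?r ^ j) \<le> 1 / (1 - ?r)" .
  qed (use r0 in simp)
  finally show ?thesis by simp
qed

lemma pent_sums:
  assumes "norm q < 1"
  shows "(\<lambda>n. pent q (Suc n)) sums (qpoch_inf q - 1)"
proof -
  let ?r = "norm q" and ?M = "exp (1 / (1 - norm q))"
  have cp: "convergent_prod (\<lambda>j. 1 - q ^ (j + 1))"
  proof (rule abs_convergent_prod_imp_convergent_prod, rule summable_imp_abs_convergent_prod)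
    have "summable (\<lambda>i. ?r * ?r ^ i)"
      by (intro summable_mult summable_geometric) (use assms in auto)
    thus "summable (\<lambda>i. norm (1 - q ^ (i + 1) - 1))" by (simp add: norm_power norm_mult)
  qed
  have "(\<lambda>n. \<Prod>i\<le>n. 1 - q ^ (i + 1)) \<longlonglongrightarrow> qpoch_inf q"
    unfolding qpoch_inf_def by (rule convergent_prod_LIMSEQ[OF cp])
  hence "(\<lambda>n. \<Prod>i<Suc n. 1 - q ^ (i + 1)) \<longlonglongrightarrow> qpoch_inf q"
    by (simp add: lessThan_Suc_atMost)
  hence P: "(\<lambda>N. pch q 0 N) \<longlonglongrightarrow> qpoch_inf q"
    unfolding pch_0 by (rule LIMSEQ_imp_Suc)
  have "(\<lambda>N. ?M / (1 - ?r) * ?r ^ N) \<longlonglongrightarrow> ?M / (1 - ?r) * 0"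
    by (intro tendsto_mult tendsto_const LIMSEQ_power_zero) (use assms in auto)
  hence g0: "(\<lambda>N. ?M / (1 - ?r) * ?r ^ N) \<longlonglongrightarrow> 0" by simp
  have Z: "(\<lambda>N. \<Sum>j<N. tt q N (Suc j)) \<longlonglongrightarrow> 0"
    by (rule Lim_null_comparison[OF always_eventually[OF allI[OF rem_bound[OF assms]]] g0])
  have "(\<lambda>N. pch q 0 N + (\<Sum>j<N. tt q N (Suc j))) \<longlonglongrightarrow> qpoch_inf q + 0"
    by (rule tendsto_add[OF P Z])
  moreover have "SS q N = pch q 0 N + (\<Sum>j<N. tt q N (Suc j))" for N
    unfolding SS_def by (simp add: sum.atMost_shift tt_def tri_def)
  ultimately have "(\<lambda>N. SS q N) \<longlonglongrightarrow> qpoch_inf q" by simp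
  hence "(\<lambda>N. SS q N - 1) \<longlonglongrightarrow> qpoch_inf q - 1"
    by (intro tendsto_diff tendsto_const)
  thus ?thesis unfolding sums_def shanks by simp
qed


lemma qpoch_cp:
  fixes q :: complex
  assumes "norm q < 1"
  shows "convergent_prod (\<lambda>j. 1 - q ^ (j + 1))"
proof (rule abs_convergent_prod_imp_convergent_prod, rule summable_imp_abs_convergent_prod)
  have "summable (\<lambda>i. norm q * norm q ^ i)"
    by (intro summable_mult summable_geometric) (use assms in auto)
  thus "summable (\<lambda>i. norm (1 - q ^ (i + 1) - 1))" by (simp add: norm_power norm_mult)
qed

lemma qpoch_nz:
  assumes "norm q < 1"
  shows "qpoch_inf q \<noteq> 0"
  unfolding qpoch_inf_def
proof (rule prodinf_nonzero[OF qpoch_cp[OF assms]])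
  fix i :: nat
  have "norm (q ^ (i + 1)) < 1"
    using power_strict_mono[of "norm q" 1 "i+1"] assms by (simp add: norm_power del: power_Suc)
  thus "1 - q ^ (i + 1) \<noteq> 0" by auto
qed

lemma alg:
  fixes z w x K :: complex
  assumes zw: "z * w = 1" and D: "(1 - z * x) * (1 - w * x) \<noteq> 0"
  shows "K * (1 + x ^ 3) / ((1 - z * x) * (1 - w * x))
       = (z + w - 1) * (K * x * (1 + x) / ((1 - z * x) * (1 - w * x))) + K * (1 + x)"
proof -
  have e: "K * (1 + x ^ 3) = (z + w - 1) * (K * x * (1 + x)) + K * (1 + x) * ((1 - z * x) * (1 - w * x))"
    using zw by algebra
  show ?thesis using D unfolding e by (simp add: field_simps)
qed


lemma exp_shift: "(m::nat) \<ge> 1 \<Longrightarrow> (m * (3 * m + 1)) div 2 = (m * (3 * m - 1)) div 2 + m"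
proof -
  assume "m \<ge> 1"
  hence "m * (3 * m + 1) = m * (3 * m - 1) + 2 * m"
    by (cases m) (simp_all add: algebra_simps)
  thus ?thesis by simp
qed

theorem lemma4p1:
  fixes q z :: complex
  assumes "norm q < 1"
    and "z \<noteq> 0"
    and "\<And>n::nat. n \<ge> 1 \<Longrightarrow> z * q ^ n \<noteq> 1"
    and "\<And>n::nat. n \<ge> 1 \<Longrightarrow> inverse z * q ^ n \<noteq> 1"
  shows "(1 + (\<Sum>n. (\<lambda>m. (1 - z) * (1 - inverse z) * (-1) ^ m
        * q ^ ((m * (3 * m - 1)) div 2) * (1 + q ^ (3 * m))
        / ((1 - z * q ^ m) * (1 - inverse z * q ^ m))) (n + 1))) / qpoch_inf q
    = (z + inverse z - 1) * R z q + (1 - z) * (1 - inverse z)"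
proof -
  define w where "w = inverse z"
  define c where "c = (1 - z) * (1 - w)"
  define P where "P = qpoch_inf q"
  define L where "L = (\<lambda>m. (1 - z) * (1 - inverse z) * (-1) ^ m
        * q ^ ((m * (3 * m - 1)) div 2) * (1 + q ^ (3 * m))
        / ((1 - z * q ^ m) * (1 - inverse z * q ^ m)))"
  define Rt where "Rt = (\<lambda>m. (1 - z) * (1 - inverse z) * (-1) ^ m
        * q ^ ((m * (3 * m + 1)) div 2) * (1 + q ^ m)
        / ((1 - z * q ^ m) * (1 - inverse z * q ^ m)))"
  have zw: "z * w = 1" using assms(2) by (simp add: w_def)
  have D: "(1 - z * q ^ m) * (1 - w * q ^ m) \<noteq> 0" if "m \<ge> 1" for m
    using assms(3,4)[OF that] by (simp add: w_def)
  have tm: "L m = (z + w - 1) * Rt m + c * pent q m" if m: "m \<ge> 1" for m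
  proof -
    define K where "K = c * (-1) ^ m * q ^ ((m * (3 * m - 1)) div 2)"
    have "L m = K * (1 + (q ^ m) ^ 3) / ((1 - z * q ^ m) * (1 - w * q ^ m))"
      unfolding L_def K_def c_def w_def by (simp add: power_mult[symmetric] mult.commute)
    also have "\<dots> = (z + w - 1) * (K * q ^ m * (1 + q ^ m) / ((1 - z * q ^ m) * (1 - w * q ^ m)))
        + K * (1 + q ^ m)"
      by (rule alg[OF zw D[OF m]])
    also have "K * q ^ m * (1 + q ^ m) / ((1 - z * q ^ m) * (1 - w * q ^ m)) = Rt m"
      unfolding Rt_def K_def c_def w_def exp_shift[OF m] by (simp add: power_add)
    also have "K * (1 + q ^ m) = c * pent q m"
      unfolding K_def pent_def by (simp add: mult.assoc)
    finally show ?thesis .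
  qed
  have pent: "(\<lambda>n. pent q (Suc n)) sums (P - 1)"
    unfolding P_def by (rule pent_sums[OF assms(1)])
  define a where "a = (\<lambda>m. c / ((1 - z * q ^ m) * (1 - w * q ^ m)))"
  have q0: "(\<lambda>m. q ^ m) \<longlonglongrightarrow> 0" by (rule LIMSEQ_power_zero) (use assms(1) in simp)
  have "a \<longlonglongrightarrow> c / ((1 - z * 0) * (1 - w * 0))"
    unfolding a_def by (intro tendsto_intros q0) simp
  hence "Bseq a" by (intro convergent_imp_Bseq) (auto simp: convergent_def)
  then obtain B where B: "B > 0" "\<And>m. norm (a m) \<le> B" by (auto simp: Bseq_def)
  have Rta: "Rt m = a m * ((-1) ^ m * q ^ ((m * (3 * m + 1)) div 2) * (1 + q ^ m))" for m
    unfolding Rt_def a_def c_def w_def by simp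
  have sR: "summable (\<lambda>n. Rt (n + 1))"
  proof (rule summable_comparison_test')
    show "summable (\<lambda>n. 2 * B * norm q ^ (n + 1))"
      by (intro summable_mult summable_ignore_initial_segment summable_geometric) (use assms(1) in auto)
    fix n :: nat
    let ?m = "n + 1"
    have "norm (Rt ?m) = norm (a ?m) * (norm q ^ ((?m * (3 * ?m + 1)) div 2) * norm (1 + q ^ ?m))"
      unfolding Rta by (simp add: norm_mult norm_power)
    also have "\<dots> \<le> B * (norm q ^ ?m * 2)"
    proof (intro mult_mono B(2) mult_nonneg_nonneg)
      have "?m \<le> (?m * (3 * ?m + 1)) div 2" by (simp add: exp_shift)
      thus "norm q ^ ((?m * (3 * ?m + 1)) div 2) \<le> norm q ^ ?m"
        by (rule power_decreasing) (use assms(1) in auto)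
      have "norm (1 + q ^ ?m) \<le> 1 + norm q ^ ?m" by (metis norm_one norm_power norm_triangle_ineq)
      also have "norm q ^ ?m \<le> 1" using assms(1) by (intro power_le_one) auto
      finally show "norm (1 + q ^ ?m) \<le> 2" by simp
    qed (use B in auto)
    finally show "norm (Rt (n + 1)) \<le> 2 * B * norm q ^ (n + 1)" by (simp add: mult_ac)
  qed
  define SR where "SR = (\<Sum>n. Rt (n + 1))"
  have Rs: "(\<lambda>n. Rt (n + 1)) sums SR" unfolding SR_def using sR by (rule summable_sums)
  have "(\<lambda>n. (z + w - 1) * Rt (n + 1) + c * pent q (Suc n)) sums ((z + w - 1) * SR + c * (P - 1))"
    by (intro sums_add sums_mult Rs pent)
  moreover have "(\<lambda>n. (z + w - 1) * Rt (n + 1) + c * pent q (Suc n)) = (\<lambda>n. L (n + 1))"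
    using tm by auto
  ultimately have Ls: "(\<Sum>n. L (n + 1)) = (z + w - 1) * SR + c * (P - 1)"
    by (simp add: sums_iff)
  have RR: "R z q = (1 + SR) / P"
    unfolding R_def SR_def Rt_def P_def by simp
  have Pnz: "P \<noteq> 0" unfolding P_def by (rule qpoch_nz[OF assms(1)])
  have cw: "c = 1 - (z + w - 1)" unfolding c_def using zw by algebra
  have "(1 + (\<Sum>n. L (n + 1))) / P = (z + w - 1) * ((1 + SR) / P) + c"
    unfolding Ls using Pnz cw by (simp add: field_simps)
  hence X: "(1 + (\<Sum>n. L (n + 1))) / P = (z + w - 1) * R z q + c" unfolding RR .
  show ?thesis using X by (simp only: L_def P_def c_def w_def)
qed

end
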